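(* Let $f\colon[a,b]\to\mathbb{R}$ be Laplace integrable on $[a,b]$ and let $\{g_n\}$ be a sequence of functions of bounded variation on $[a,b]$ with $\sup_nV(g_n,[a,b])<\infty$ that converges pointwise on $[a,b]$ to a function $g$. Let $G_n(x)=\int_a^xg_n$ and $G(x)=\int_a^xg$. Then $\lim_{n\to\infty}\int_a^bfG_n=\int_a^bfG$.
   Context: Laplace integral on $[a,b]$: with lower/upper Laplace derivates $\underline{LD}_1F(x)$, $\overline{LD}_1F(x)$ being the minimum of the $\liminf$'s, resp. maximum of the $\limsup$'s, as $s\to\infty$ of $s^2\int_0^\delta e^{-st}[F(x+t)-F(x)]dt$ and $(-s^2)\int_0^\delta e^{-st}[F(x-t)-F(x)]dt$ (one-sided at endpoints), a major function of $f$ is a continuous $U$ with $\underline{LD}_1U\geqslant f$, $\underline{LD}_1U>-\infty$ everywhere on $[a,b]$, a minor function a continuous $V$ with $\overline{LD}_1V\leqslant f$, $\overline{LD}_1V<\infty$ everywhere, and $f$ is Laplace integrable if $\sup_V(V(b)-V(a))=\inf_U(U(b)-U(a))$ is finite, this value being $\int_a^bf$. $V(g_n,[a,b])$ is the total variation of $g_n$ on $[a,b]$ ("uniform bounded variation"). *)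

theory Defs
  imports "HOL-Analysis.Analysis"
begin

definition partitions :: "real \<Rightarrow> real \<Rightarrow> real list set" where
  "partitions a b = {xs. xs \<noteq> [] \<and> hd xs = a \<and> last xs = b \<and> sorted_wrt (<) xs}"

definition variation_sum :: "(real \<Rightarrow> real) \<Rightarrow> real list \<Rightarrow> real" where
  "variation_sum g xs = (\<Sum>i<length xs - 1. \<bar>g (xs ! Suc i) - g (xs ! i)\<bar>)"

definition total_variation :: "(real \<Rightarrow> real) \<Rightarrow> real \<Rightarrow> real \<Rightarrow> ereal" where
  "total_variation g a b = (SUP xs\<in>partitions a b. ereal (variation_sum g xs))"

definition bounded_variation_on :: "(real \<Rightarrow> real) \<Rightarrow> real \<Rightarrow> real \<Rightarrow> bool" where
  "bounded_variation_on g a b \<longleftrightarrow> total_variation g a b < \<infinity>"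

text \<open>Right and left Laplace expressions at x, with delta = b - x (resp. x - a).
  The limits inferior/superior as s tends to infinity do not depend on the choice of delta > 0.\<close>

definition laplace_right :: "real \<Rightarrow> (real \<Rightarrow> real) \<Rightarrow> real \<Rightarrow> real \<Rightarrow> real" where
  "laplace_right b F x s =
     s\<^sup>2 * integral {0..b - x} (\<lambda>t. exp (- s * t) * (F (x + t) - F x))"

definition laplace_left :: "real \<Rightarrow> (real \<Rightarrow> real) \<Rightarrow> real \<Rightarrow> real \<Rightarrow> real" where
  "laplace_left a F x s =
     - (s\<^sup>2) * integral {0..x - a} (\<lambda>t. exp (- s * t) * (F (x - t) - F x))"

definition lower_LD :: "real \<Rightarrow> real \<Rightarrow> (real \<Rightarrow> real) \<Rightarrow> real \<Rightarrow> ereal" where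
  "lower_LD a b F x =
     (if x = a then Liminf at_top (\<lambda>s. ereal (laplace_right b F x s))
      else if x = b then Liminf at_top (\<lambda>s. ereal (laplace_left a F x s))
      else min (Liminf at_top (\<lambda>s. ereal (laplace_right b F x s)))
               (Liminf at_top (\<lambda>s. ereal (laplace_left a F x s))))"

definition upper_LD :: "real \<Rightarrow> real \<Rightarrow> (real \<Rightarrow> real) \<Rightarrow> real \<Rightarrow> ereal" where
  "upper_LD a b F x =
     (if x = a then Limsup at_top (\<lambda>s. ereal (laplace_right b F x s))
      else if x = b then Limsup at_top (\<lambda>s. ereal (laplace_left a F x s))
      else max (Limsup at_top (\<lambda>s. ereal (laplace_right b F x s)))
               (Limsup at_top (\<lambda>s. ereal (laplace_left a F x s))))"

definition laplace_major :: "real \<Rightarrow> real \<Rightarrow> (real \<Rightarrow> real) \<Rightarrow> (real \<Rightarrow> real) \<Rightarrow> bool" where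
  "laplace_major a b f U \<longleftrightarrow> continuous_on {a..b} U \<and>
     (\<forall>x\<in>{a..b}. lower_LD a b U x \<ge> ereal (f x) \<and> lower_LD a b U x > -\<infinity>)"

definition laplace_minor :: "real \<Rightarrow> real \<Rightarrow> (real \<Rightarrow> real) \<Rightarrow> (real \<Rightarrow> real) \<Rightarrow> bool" where
  "laplace_minor a b f V \<longleftrightarrow> continuous_on {a..b} V \<and>
     (\<forall>x\<in>{a..b}. upper_LD a b V x \<le> ereal (f x) \<and> upper_LD a b V x < \<infinity>)"

definition laplace_upper :: "real \<Rightarrow> real \<Rightarrow> (real \<Rightarrow> real) \<Rightarrow> ereal" where
  "laplace_upper a b f = (INF U\<in>{U. laplace_major a b f U}. ereal (U b - U a))"

definition laplace_lower :: "real \<Rightarrow> real \<Rightarrow> (real \<Rightarrow> real) \<Rightarrow> ereal" where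
  "laplace_lower a b f = (SUP V\<in>{V. laplace_minor a b f V}. ereal (V b - V a))"

definition laplace_integrable :: "real \<Rightarrow> real \<Rightarrow> (real \<Rightarrow> real) \<Rightarrow> bool" where
  "laplace_integrable a b f \<longleftrightarrow>
     laplace_lower a b f = laplace_upper a b f \<and> \<bar>laplace_upper a b f\<bar> \<noteq> \<infinity>"

definition laplace_integral :: "real \<Rightarrow> real \<Rightarrow> (real \<Rightarrow> real) \<Rightarrow> real" where
  "laplace_integral a b f = real_of_ereal (laplace_upper a b f)"

end

theory Submission
  imports Defs
begin


lemma kfun:
  fixes s d :: real assumes s: "s > 0" and d: "d \<ge> 0"
  shows "s\<^sup>2 * integral {0..d} (\<lambda>t. exp (- s * t) * t) = 1 - (s * d + 1) * exp (- s * d)"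
proof -
  define P where "P t = - (t / s + 1 / s\<^sup>2) * exp (- s * t)" for t
  have "((\<lambda>t. exp (- s * t) * t) has_integral (P d - P 0)) {0..d}"
  proof (rule fundamental_theorem_of_calculus[OF d])
    fix t :: real assume "t \<in> {0..d}"
    have "(P has_real_derivative exp (- s * t) * t) (at t within {0..d})"
      unfolding P_def
      using s by (auto intro!: derivative_eq_intros simp: field_simps power2_eq_square)
    then show "(P has_vector_derivative exp (- s * t) * t) (at t within {0..d})"
      by (simp add: has_real_derivative_iff_has_vector_derivative)
  qed
  then have "integral {0..d} (\<lambda>t. exp (- s * t) * t) = P d - P 0" by (rule integral_unique)
  then show ?thesis using s unfolding P_def by (simp add: field_simps power2_eq_square)
qed



lemma lim_lin_at_top: fixes d :: real assumes "d > 0"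
  shows "filterlim (\<lambda>s. d * s) at_top at_top"
  by (rule filterlim_tendsto_pos_mult_at_top[OF tendsto_const assms filterlim_ident])

lemma lim_aux1: fixes d :: real assumes d: "d > 0"
  shows "((\<lambda>s. (s * d + 1) * exp (- s * d)) \<longlongrightarrow> 0) at_top"
proof -
  have "((\<lambda>u::real. u ^ 1 / exp u + u ^ 0 / exp u) \<longlongrightarrow> 0 + 0) at_top"
    by (rule tendsto_add[OF tendsto_power_div_exp_0 tendsto_power_div_exp_0])
  then have "((\<lambda>u::real. (u + 1) * exp (- u)) \<longlongrightarrow> 0) at_top"
    by (simp add: exp_minus field_simps)
  from filterlim_compose[OF this lim_lin_at_top[OF d]]
  show ?thesis by (simp add: mult.commute)
qed

lemma lim_aux2: fixes h :: real assumes h: "h > 0"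
  shows "((\<lambda>s. s\<^sup>2 * exp (- s * h)) \<longlongrightarrow> 0) at_top"
proof -
  have "((\<lambda>u::real. u ^ 2 / exp u / h\<^sup>2) \<longlongrightarrow> 0 / h\<^sup>2) at_top"
    by (intro tendsto_divide tendsto_power_div_exp_0 tendsto_const) (use h in auto)
  then have "((\<lambda>u::real. u ^ 2 * exp (- u) / h\<^sup>2) \<longlongrightarrow> 0) at_top"
    by (simp add: exp_minus field_simps)
  from filterlim_compose[OF this lim_lin_at_top[OF h]]
  show ?thesis using h by (simp add: mult.commute power_mult_distrib)
qed

lemma kfun_le1: fixes s d :: real assumes "s > 0" "d \<ge> 0"
  shows "s\<^sup>2 * integral {0..d} (\<lambda>t. exp (- s * t) * t) \<le> 1"
  using kfun[OF assms] assms by (simp add: mult_nonneg_nonneg)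

lemma kfun_lim: fixes d :: real assumes "d > 0"
  shows "((\<lambda>s. s\<^sup>2 * integral {0..d} (\<lambda>t. exp (- s * t) * t)) \<longlongrightarrow> 1) at_top"
proof -
  have "((\<lambda>s. 1 - (s * d + 1) * exp (- s * d)) \<longlongrightarrow> 1 - 0) at_top"
    by (intro tendsto_diff tendsto_const lim_aux1 assms)
  moreover have "eventually (\<lambda>s. 1 - (s * d + 1) * exp (- s * d) = s\<^sup>2 * integral {0..d} (\<lambda>t. exp (- s * t) * t)) at_top"
    using eventually_gt_at_top[of 0] by eventually_elim (use assms kfun in auto)
  ultimately show ?thesis by (simp add: tendsto_cong)
qed

lemma core:
  fixes R :: "real \<Rightarrow> real" and d e :: real
  assumes d: "d > 0" and cont: "continuous_on {0..d} R"
    and small: "\<And>\<eta>. \<eta> > 0 \<Longrightarrow> \<exists>h>0. \<forall>t\<in>{0..d}. t \<le> h \<longrightarrow> R t \<le> \<eta> * t"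
    and e: "e > 0"
  shows "eventually (\<lambda>s. s\<^sup>2 * integral {0..d} (\<lambda>t. exp (- s * t) * R t) \<le> e) at_top"
proof -
  have "compact (R ` {0..d})" by (rule compact_continuous_image[OF cont compact_Icc])
  then obtain B0 where B0: "\<forall>y\<in>R ` {0..d}. norm y \<le> B0"
    using compact_imp_bounded bounded_iff by metis
  define B where "B = max B0 0"
  have B: "\<And>t. t \<in> {0..d} \<Longrightarrow> \<bar>R t\<bar> \<le> B" "B \<ge> 0" using B0 unfolding B_def by force+
  obtain h where h: "h > 0" "\<forall>t\<in>{0..d}. t \<le> h \<longrightarrow> R t \<le> (e/2) * t"
    using small[of "e/2"] e by auto
  have "((\<lambda>s. B * d * (s\<^sup>2 * exp (- s * h))) \<longlongrightarrow> B * d * 0) at_top"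
    by (intro tendsto_mult tendsto_const lim_aux2 h)
  then have ev: "eventually (\<lambda>s. B * d * (s\<^sup>2 * exp (- s * h)) < e/2) at_top"
    using e by (intro order_tendstoD) auto
  show ?thesis
    using ev eventually_gt_at_top[of 0]
  proof eventually_elim
    case (elim s)
    have i1: "(\<lambda>t. exp (- s * t) * R t) integrable_on {0..d}"
      by (intro integrable_continuous_interval continuous_intros cont)
    have i2: "(\<lambda>t. (e/2) * (exp (- s * t) * t) + B * exp (- s * h)) integrable_on {0..d}"
      by (intro integrable_continuous_interval continuous_intros)
    have i3: "(\<lambda>t. exp (- s * t) * t) integrable_on {0..d}"
      by (intro integrable_continuous_interval continuous_intros)
    have pw: "exp (- s * t) * R t \<le> (e/2) * (exp (- s * t) * t) + B * exp (- s * h)"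
      if t: "t \<in> {0..d}" for t
    proof (cases "t \<le> h")
      case True
      then have "exp (- s * t) * R t \<le> exp (- s * t) * ((e/2) * t)"
        using h t by (intro mult_left_mono) auto
      then have "exp (- s * t) * R t \<le> (e/2) * (exp (- s * t) * t)" by (simp add: algebra_simps)
      moreover have "0 \<le> B * exp (- s * h)" using B by simp
      ultimately show ?thesis by linarith
    next
      case False
      have "exp (- s * t) * R t \<le> exp (- s * t) * B"
        using B t by (intro mult_left_mono) (auto simp: abs_le_iff)
      also have "\<dots> \<le> exp (- s * h) * B"
        using False elim B by (intro mult_right_mono) auto
      moreover have "0 \<le> (e/2) * (exp (- s * t) * t)" using e t by simp
      ultimately show ?thesis using mult.commute[of B "exp (- s * h)"] by linarith
    qed
    have "integral {0..d} (\<lambda>t. exp (- s * t) * R t)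
        \<le> integral {0..d} (\<lambda>t. (e/2) * (exp (- s * t) * t) + B * exp (- s * h))"
      by (rule integral_le[OF i1 i2 pw])
    also have "\<dots> = (e/2) * integral {0..d} (\<lambda>t. exp (- s * t) * t) + B * exp (- s * h) * d"
      using i3 d by (subst integral_add) (auto intro: integrable_on_mult_right)
    finally have "s\<^sup>2 * integral {0..d} (\<lambda>t. exp (- s * t) * R t)
        \<le> s\<^sup>2 * ((e/2) * integral {0..d} (\<lambda>t. exp (- s * t) * t) + B * exp (- s * h) * d)"
      by (intro mult_left_mono) auto
    also have "\<dots> = (e/2) * (s\<^sup>2 * integral {0..d} (\<lambda>t. exp (- s * t) * t)) + B * d * (s\<^sup>2 * exp (- s * h))"
      by (simp add: algebra_simps)
    also have "\<dots> \<le> (e/2) * 1 + e/2"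
      using kfun_le1[of s d] elim d e by (intro add_mono mult_left_mono) auto
    finally show ?case by simp
  qed
qed

lemma vanish:
  fixes R :: "real \<Rightarrow> real" and d :: real
  assumes d: "d > 0" and cont: "continuous_on {0..d} R"
    and small: "\<And>\<eta>. \<eta> > 0 \<Longrightarrow> \<exists>h>0. \<forall>t\<in>{0..d}. t \<le> h \<longrightarrow> \<bar>R t\<bar> \<le> \<eta> * t"
  shows "((\<lambda>s. s\<^sup>2 * integral {0..d} (\<lambda>t. exp (- s * t) * R t)) \<longlongrightarrow> 0) at_top"
proof (rule tendstoI)
  fix e :: real assume e: "e > 0"
  have s1: "\<exists>h>0. \<forall>t\<in>{0..d}. t \<le> h \<longrightarrow> R t \<le> \<eta> * t" if "\<eta> > 0" for \<eta>
    using small[OF that] by (meson abs_le_D1)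
  have s2: "\<exists>h>0. \<forall>t\<in>{0..d}. t \<le> h \<longrightarrow> - R t \<le> \<eta> * t" if "\<eta> > 0" for \<eta>
    using small[OF that] by (meson abs_le_D2)
  have c2: "continuous_on {0..d} (\<lambda>t. - R t)" by (intro continuous_intros cont)
  have "eventually (\<lambda>s. s\<^sup>2 * integral {0..d} (\<lambda>t. exp (- s * t) * R t) \<le> e/2) at_top"
    using core[OF d cont s1, of "e/2"] e by auto
  moreover have "eventually (\<lambda>s. s\<^sup>2 * integral {0..d} (\<lambda>t. exp (- s * t) * - R t) \<le> e/2) at_top"
    using core[OF d c2 s2, of "e/2"] e by auto
  ultimately show "eventually (\<lambda>s. dist (s\<^sup>2 * integral {0..d} (\<lambda>t. exp (- s * t) * R t)) 0 < e) at_top"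
    by eventually_elim (use e in \<open>auto simp: dist_real_def abs_less_iff\<close>)
qed



lemma cont_right:
  fixes F :: "real \<Rightarrow> real"
  assumes "continuous_on {a..b} F" "a \<le> x"
  shows "continuous_on {0..b - x} (\<lambda>t. F (x + t))"
proof -
  have "continuous_on {0..b - x} (\<lambda>t. x + t)" by (rule continuous_on_add[OF continuous_on_const continuous_on_id])
  from continuous_on_compose2[OF assms(1) this] show ?thesis using assms(2) by force
qed

lemma cont_left:
  fixes F :: "real \<Rightarrow> real"
  assumes "continuous_on {a..b} F" "x \<le> b"
  shows "continuous_on {0..x - a} (\<lambda>t. F (x - t))"
proof -
  have "continuous_on {0..x - a} (\<lambda>t. x - t)" by (rule continuous_on_diff[OF continuous_on_const continuous_on_id])
  from continuous_on_compose2[OF assms(1) this] show ?thesis using assms(2) by force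
qed

lemma laplace_left_reflect:
  "laplace_left a F x s = laplace_right (- a) (\<lambda>y. - F (- y)) (- x) s"
proof -
  have "(\<lambda>t. exp (- s * t) * (- F (- (- x + t)) - - F (- (- x)))) = (\<lambda>t. - (exp (- s * t) * (F (x - t) - F x)))"
    by (auto simp: fun_eq_iff algebra_simps)
  then show ?thesis unfolding laplace_left_def laplace_right_def by simp
qed

lemma laplace_right_neg: "laplace_right b (\<lambda>y. - F y) x s = - laplace_right b F x s"
proof -
  have "(\<lambda>t. exp (- s * t) * (- F (x + t) - - F x)) = (\<lambda>t. - (exp (- s * t) * (F (x + t) - F x)))"
    by (auto simp: fun_eq_iff algebra_simps)
  then show ?thesis unfolding laplace_right_def by simp
qed

lemma laplace_left_neg: "laplace_left a (\<lambda>y. - F y) x s = - laplace_left a F x s"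
proof -
  have "(\<lambda>t. exp (- s * t) * (- F (x - t) - - F x)) = (\<lambda>t. - (exp (- s * t) * (F (x - t) - F x)))"
    by (auto simp: fun_eq_iff algebra_simps)
  then show ?thesis unfolding laplace_left_def by simp
qed

lemma laplace_right_lin:
  assumes "continuous_on {a..b} F1" "continuous_on {a..b} F2" "a \<le> x"
  shows "laplace_right b (\<lambda>y. F1 y - c * F2 y) x s = laplace_right b F1 x s - c * laplace_right b F2 x s"
proof -
  have i1: "(\<lambda>t. exp (- s * t) * (F1 (x + t) - F1 x)) integrable_on {0..b - x}"
    by (intro integrable_continuous_interval continuous_intros cont_right[OF assms(1,3)])
  have i2: "(\<lambda>t. c * (exp (- s * t) * (F2 (x + t) - F2 x))) integrable_on {0..b - x}"
    by (intro integrable_continuous_interval continuous_intros cont_right[OF assms(2,3)])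
  have eq: "integral {0..b - x} (\<lambda>t. exp (- s * t) * (F1 (x + t) - c * F2 (x + t) - (F1 x - c * F2 x)))
     = integral {0..b - x} (\<lambda>t. exp (- s * t) * (F1 (x + t) - F1 x) - c * (exp (- s * t) * (F2 (x + t) - F2 x)))"
    by (simp add: algebra_simps)
  also have "\<dots> = integral {0..b - x} (\<lambda>t. exp (- s * t) * (F1 (x + t) - F1 x)) - c * integral {0..b - x} (\<lambda>t. exp (- s * t) * (F2 (x + t) - F2 x))"
    by (subst integral_diff[OF i1 i2]) simp
  finally show ?thesis unfolding laplace_right_def by (simp only:) (simp add: algebra_simps)
qed

lemma laplace_left_lin:
  assumes "continuous_on {a..b} F1" "continuous_on {a..b} F2" "x \<le> b"
  shows "laplace_left a (\<lambda>y. F1 y - c * F2 y) x s = laplace_left a F1 x s - c * laplace_left a F2 x s"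
proof -
  have i1: "(\<lambda>t. exp (- s * t) * (F1 (x - t) - F1 x)) integrable_on {0..x - a}"
    by (intro integrable_continuous_interval continuous_intros cont_left[OF assms(1,3)])
  have i2: "(\<lambda>t. c * (exp (- s * t) * (F2 (x - t) - F2 x))) integrable_on {0..x - a}"
    by (intro integrable_continuous_interval continuous_intros cont_left[OF assms(2,3)])
  have eq: "integral {0..x - a} (\<lambda>t. exp (- s * t) * (F1 (x - t) - c * F2 (x - t) - (F1 x - c * F2 x)))
     = integral {0..x - a} (\<lambda>t. exp (- s * t) * (F1 (x - t) - F1 x) - c * (exp (- s * t) * (F2 (x - t) - F2 x)))"
    by (simp add: algebra_simps)
  also have "\<dots> = integral {0..x - a} (\<lambda>t. exp (- s * t) * (F1 (x - t) - F1 x)) - c * integral {0..x - a} (\<lambda>t. exp (- s * t) * (F2 (x - t) - F2 x))"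
    by (subst integral_diff[OF i1 i2]) simp
  finally show ?thesis unfolding laplace_left_def by (simp only:) (simp add: algebra_simps)
qed

lemma major_iff:
  assumes ab: "a < b"
  shows "laplace_major a b f U \<longleftrightarrow> continuous_on {a..b} U \<and>
    (\<forall>x. a \<le> x \<and> x < b \<longrightarrow> ereal (f x) \<le> Liminf at_top (\<lambda>s. ereal (laplace_right b U x s))) \<and>
    (\<forall>x. a < x \<and> x \<le> b \<longrightarrow> ereal (f x) \<le> Liminf at_top (\<lambda>s. ereal (laplace_left a U x s)))"
    (is "?L \<longleftrightarrow> ?C \<and> ?R1 \<and> ?R2")
proof -
  have lt: "ereal (f x) \<le> L \<Longrightarrow> L > -\<infinity>" for x L
    by (cases L) auto
  have pt: "(lower_LD a b U x \<ge> ereal (f x) \<and> lower_LD a b U x > -\<infinity>) \<longleftrightarrow>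
     ((a \<le> x \<and> x < b \<longrightarrow> ereal (f x) \<le> Liminf at_top (\<lambda>s. ereal (laplace_right b U x s))) \<and>
      (a < x \<and> x \<le> b \<longrightarrow> ereal (f x) \<le> Liminf at_top (\<lambda>s. ereal (laplace_left a U x s))))"
    if x: "x \<in> {a..b}" for x
  proof (cases "x = a")
    case True then show ?thesis using ab lt unfolding lower_LD_def by auto
  next
    case False
    show ?thesis
    proof (cases "x = b")
      case True then show ?thesis using ab lt False unfolding lower_LD_def by auto
    next
      case False2: False
      then have "a < x" "x < b" using x False by auto
      then show ?thesis using False False2 lt unfolding lower_LD_def by auto
    qed
  qed
  show ?thesis
    unfolding laplace_major_def using pt by force
qed

lemma minor_iff:
  assumes ab: "a < b"
  shows "laplace_minor a b f V \<longleftrightarrow> continuous_on {a..b} V \<and>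
    (\<forall>x. a \<le> x \<and> x < b \<longrightarrow> Limsup at_top (\<lambda>s. ereal (laplace_right b V x s)) \<le> ereal (f x)) \<and>
    (\<forall>x. a < x \<and> x \<le> b \<longrightarrow> Limsup at_top (\<lambda>s. ereal (laplace_left a V x s)) \<le> ereal (f x))"
proof -
  have lt: "L \<le> ereal (f x) \<Longrightarrow> L < \<infinity>" for x L
    by (cases L) auto
  have pt: "(upper_LD a b V x \<le> ereal (f x) \<and> upper_LD a b V x < \<infinity>) \<longleftrightarrow>
     ((a \<le> x \<and> x < b \<longrightarrow> Limsup at_top (\<lambda>s. ereal (laplace_right b V x s)) \<le> ereal (f x)) \<and>
      (a < x \<and> x \<le> b \<longrightarrow> Limsup at_top (\<lambda>s. ereal (laplace_left a V x s)) \<le> ereal (f x)))"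
    if x: "x \<in> {a..b}" for x
  proof (cases "x = a")
    case True then show ?thesis using ab lt unfolding upper_LD_def by auto
  next
    case False
    show ?thesis
    proof (cases "x = b")
      case True then show ?thesis using ab lt False unfolding upper_LD_def by auto
    next
      case False2: False
      then have "a < x" "x < b" using x False by auto
      then show ?thesis using False False2 lt unfolding upper_LD_def by auto
    qed
  qed
  show ?thesis
    unfolding laplace_minor_def using pt by force
qed

lemma minor_neg:
  assumes "a < b"
  shows "laplace_minor a b f V \<longleftrightarrow> laplace_major a b (\<lambda>x. - f x) (\<lambda>x. - V x)"
proof -
  have c: "continuous_on {a..b} (\<lambda>x. - V x) \<longleftrightarrow> continuous_on {a..b} V"
    using continuous_on_minus[of "{a..b}" V] continuous_on_minus[of "{a..b}" "\<lambda>x. - V x"] by auto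
  have e1: "Liminf at_top (\<lambda>s. ereal (laplace_right b (\<lambda>x. - V x) x s)) = - Limsup at_top (\<lambda>s. ereal (laplace_right b V x s))" for x
    unfolding laplace_right_neg using ereal_Liminf_uminus[of at_top "\<lambda>s. ereal (laplace_right b V x s)"] by simp
  have e2: "Liminf at_top (\<lambda>s. ereal (laplace_left a (\<lambda>x. - V x) x s)) = - Limsup at_top (\<lambda>s. ereal (laplace_left a V x s))" for x
    unfolding laplace_left_neg using ereal_Liminf_uminus[of at_top "\<lambda>s. ereal (laplace_left a V x s)"] by simp
  have r: "ereal (- r) \<le> - L \<longleftrightarrow> L \<le> ereal r" for r L by (cases L) auto
  show ?thesis unfolding major_iff[OF assms] minor_iff[OF assms] c e1 e2 r ..
qed

lemma mono_thm:
  fixes F :: "real \<Rightarrow> real"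
  assumes cont: "continuous_on {a..b} F"
    and pos: "\<And>x. a \<le> x \<Longrightarrow> x < b \<Longrightarrow> 0 \<le> Liminf at_top (\<lambda>s. ereal (laplace_right b F x s))"
    and cd: "a \<le> c" "c \<le> d" "d \<le> b"
  shows "F c \<le> F d"
proof (rule ccontr)
  assume "\<not> F c \<le> F d"
  then have Fcd: "F d < F c" by simp
  then have "c < d" using cd by (cases "c = d") auto
  define \<epsilon> where "\<epsilon> = (F c - F d) / (2 * (d - c))"
  have \<epsilon>: "\<epsilon> > 0" unfolding \<epsilon>_def using Fcd \<open>c < d\<close> by simp
  define H where "H y = F y + \<epsilon> * y" for y
  have "\<epsilon> * (d - c) = (F c - F d) / 2"
    unfolding \<epsilon>_def using \<open>c < d\<close> by (simp add: field_simps)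
  then have "H c - H d = (F c - F d) / 2"
    unfolding H_def by (simp add: algebra_simps)
  then have Hcd: "H d < H c" using Fcd by simp
  have contH: "continuous_on {c..d} H"
    unfolding H_def by (intro continuous_intros continuous_on_subset[OF cont]) (use cd in auto)
  define S where "S = {c..d} \<inter> H -` {H c..}"
  have clS: "closed S" unfolding S_def by (intro continuous_closed_preimage[OF contH]) auto
  have cS: "c \<in> S" unfolding S_def using \<open>c < d\<close> by auto
  have bS: "bdd_above S" unfolding S_def by (rule bdd_aboveI[of _ d]) auto
  define x where "x = Sup S"
  have xS: "x \<in> S" unfolding x_def using closed_contains_Sup[OF _ bS clS] cS by auto
  then have x: "c \<le> x" "x \<le> d" "H c \<le> H x" unfolding S_def by auto
  have "x \<noteq> d" using x Hcd by auto
  with x have xd: "x < d" by simp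
  have after: "H y < H c" if "x < y" "y \<le> d" for y
  proof (rule ccontr)
    assume "\<not> H y < H c"
    then have "y \<in> S" unfolding S_def using that x by auto
    then have "y \<le> x" unfolding x_def by (rule cSup_upper[OF _ bS])
    then show False using that by simp
  qed
  define R where "R t = F (x + t) - F x + \<epsilon> * t" for t
  have bx: "b - x > 0" using xd cd by simp
  have contR: "continuous_on {0..b - x} R"
    unfolding R_def by (intro continuous_intros cont_right[OF cont]) (use x cd in auto)
  have Rle: "R t \<le> 0" if "t \<in> {0..b - x}" "t \<le> d - x" for t
  proof (cases "t = 0")
    case True then show ?thesis unfolding R_def by simp
  next
    case False
    then have "H (x + t) < H x" using after[of "x + t"] that x by auto
    then show ?thesis unfolding R_def H_def by (simp add: algebra_simps)
  qed
  have small: "\<exists>h>0. \<forall>t\<in>{0..b - x}. t \<le> h \<longrightarrow> R t \<le> \<eta> * t" if "\<eta> > 0" for \<eta>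
  proof (intro exI[of _ "d - x"] conjI ballI impI)
    fix t assume "t \<in> {0..b - x}" "t \<le> d - x"
    then show "R t \<le> \<eta> * t" using Rle[of t] that by (smt (verit) atLeastAtMost_iff mult_nonneg_nonneg)
  qed (use xd in simp)
  have ev1: "eventually (\<lambda>s. s\<^sup>2 * integral {0..b - x} (\<lambda>t. exp (- s * t) * R t) \<le> \<epsilon> / 4) at_top"
    using core[OF bx contR small, of "\<epsilon>/4"] \<epsilon> by simp
  have ev2: "eventually (\<lambda>s. s\<^sup>2 * integral {0..b - x} (\<lambda>t. exp (- s * t) * t) > 1/2) at_top"
    using kfun_lim[OF bx] by (rule order_tendstoD) simp
  have eq: "s\<^sup>2 * integral {0..b - x} (\<lambda>t. exp (- s * t) * R t)
      = laplace_right b F x s + \<epsilon> * (s\<^sup>2 * integral {0..b - x} (\<lambda>t. exp (- s * t) * t))" for s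
  proof -
    have i1: "(\<lambda>t. exp (- s * t) * (F (x + t) - F x)) integrable_on {0..b - x}"
      by (intro integrable_continuous_interval continuous_intros cont_right[OF cont]) (use x cd in auto)
    have i2: "(\<lambda>t. \<epsilon> * (exp (- s * t) * t)) integrable_on {0..b - x}"
      by (intro integrable_continuous_interval continuous_intros)
    have "integral {0..b - x} (\<lambda>t. exp (- s * t) * R t)
        = integral {0..b - x} (\<lambda>t. exp (- s * t) * (F (x + t) - F x) + \<epsilon> * (exp (- s * t) * t))"
      unfolding R_def by (simp add: algebra_simps)
    also have "\<dots> = integral {0..b - x} (\<lambda>t. exp (- s * t) * (F (x + t) - F x)) + \<epsilon> * integral {0..b - x} (\<lambda>t. exp (- s * t) * t)"
      by (subst integral_add[OF i1 i2]) simp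
    finally show ?thesis unfolding laplace_right_def by (simp add: algebra_simps)
  qed
  have "0 \<le> Liminf at_top (\<lambda>s. ereal (laplace_right b F x s))" using pos[of x] x cd xd by simp
  then have "\<forall>y<ereal 0. eventually (\<lambda>s. y < ereal (laplace_right b F x s)) at_top"
    unfolding le_Liminf_iff by (simp add: zero_ereal_def)
  moreover have "ereal (- \<epsilon> / 4) < ereal 0" using \<epsilon> by simp
  ultimately have ev3: "eventually (\<lambda>s. ereal (- \<epsilon> / 4) < ereal (laplace_right b F x s)) at_top"
    by blast
  have "eventually (\<lambda>s. (s\<^sup>2 * integral {0..b - x} (\<lambda>t. exp (- s * t) * R t) \<le> \<epsilon> / 4) \<and>
     (s\<^sup>2 * integral {0..b - x} (\<lambda>t. exp (- s * t) * t) > 1/2) \<and> ereal (- \<epsilon> / 4) < ereal (laplace_right b F x s)) at_top"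
    using ev1 ev2 ev3 by (intro eventually_conj)
  then obtain s where elim: "s\<^sup>2 * integral {0..b - x} (\<lambda>t. exp (- s * t) * R t) \<le> \<epsilon> / 4"
     "s\<^sup>2 * integral {0..b - x} (\<lambda>t. exp (- s * t) * t) > 1/2" "ereal (- \<epsilon> / 4) < ereal (laplace_right b F x s)"
    unfolding eventually_at_top_linorder by blast
  show False
  proof -
    have "\<epsilon> * (s\<^sup>2 * integral {0..b - x} (\<lambda>t. exp (- s * t) * t)) > \<epsilon> * (1/2)"
      using elim \<epsilon> by (intro mult_strict_left_mono) auto
    then show False using elim eq[of s] by simp
  qed
qed



lemma ev_lower:
  fixes A :: "real \<Rightarrow> real"
  assumes "\<alpha> \<ge> 0" "\<eta> > 0" "ereal c \<le> Liminf at_top (\<lambda>s. ereal (A s))"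
  shows "eventually (\<lambda>s. \<alpha> * c - \<eta> \<le> \<alpha> * A s) at_top"
proof (cases "\<alpha> = 0")
  case True then show ?thesis using assms by simp
next
  case False
  then have a: "\<alpha> > 0" using assms by simp
  have "ereal (c - \<eta> / \<alpha>) < ereal c" using a assms by simp
  then have "eventually (\<lambda>s. ereal (c - \<eta> / \<alpha>) < ereal (A s)) at_top"
    using assms(3) unfolding le_Liminf_iff by blast
  then show ?thesis
  proof eventually_elim
    case (elim s)
    then have "c - \<eta> / \<alpha> < A s" by simp
    then have "\<alpha> * (c - \<eta> / \<alpha>) \<le> \<alpha> * A s" using a by (intro mult_left_mono) auto
    then show ?case using a by (simp add: right_diff_distrib)
  qed
qed

lemma ev_upper:
  fixes B :: "real \<Rightarrow> real"
  assumes "\<beta> \<ge> 0" "\<eta> > 0" "Limsup at_top (\<lambda>s. ereal (B s)) \<le> ereal c"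
  shows "eventually (\<lambda>s. \<beta> * B s \<le> \<beta> * c + \<eta>) at_top"
proof (cases "\<beta> = 0")
  case True then show ?thesis using assms by simp
next
  case False
  then have a: "\<beta> > 0" using assms by simp
  have "ereal (c + \<eta> / \<beta>) > ereal c" using a assms by simp
  then have "eventually (\<lambda>s. ereal (c + \<eta> / \<beta>) > ereal (B s)) at_top"
    using assms(3) unfolding Limsup_le_iff by blast
  then show ?thesis
  proof eventually_elim
    case (elim s)
    then have "B s < c + \<eta> / \<beta>" by simp
    then have "\<beta> * B s \<le> \<beta> * (c + \<eta> / \<beta>)" using a by (intro mult_left_mono) auto
    then show ?case using a by (simp add: distrib_left)
  qed
qed

lemma liminf_comb:
  fixes A B r :: "real \<Rightarrow> real"
  assumes ab: "\<alpha> \<ge> 0" "\<beta> \<ge> 0"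
    and A: "ereal c \<le> Liminf at_top (\<lambda>s. ereal (A s))"
    and B: "Limsup at_top (\<lambda>s. ereal (B s)) \<le> ereal c"
    and r: "(r \<longlongrightarrow> 0) at_top"
  shows "ereal ((\<alpha> - \<beta>) * c) \<le> Liminf at_top (\<lambda>s. ereal (\<alpha> * A s - \<beta> * B s + r s))"
  unfolding le_Liminf_iff
proof (intro allI impI)
  fix y assume y: "y < ereal ((\<alpha> - \<beta>) * c)"
  show "eventually (\<lambda>s. y < ereal (\<alpha> * A s - \<beta> * B s + r s)) at_top"
  proof (cases y)
    case MInf then show ?thesis by simp
  next
    case PInf then show ?thesis using y by simp
  next
    case (real z)
    define \<eta> where "\<eta> = ((\<alpha> - \<beta>) * c - z) / 3"
    have \<eta>: "\<eta> > 0" using y real unfolding \<eta>_def by simp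
    have "eventually (\<lambda>s. dist (r s) 0 < \<eta>) at_top" using r \<eta> by (rule tendstoD)
    with ev_lower[OF ab(1) \<eta> A] ev_upper[OF ab(2) \<eta> B]
    show ?thesis
    proof eventually_elim
      case (elim s)
      have "- \<eta> < r s" using elim(3) by (simp add: dist_real_def abs_less_iff)
      moreover have "(\<alpha> - \<beta>) * c = \<alpha> * c - \<beta> * c" by (simp add: algebra_simps)
      moreover have "3 * \<eta> = (\<alpha> - \<beta>) * c - z" unfolding \<eta>_def by simp
      ultimately show ?case unfolding real using elim(1,2) by simp
    qed
  qed
qed

lemma cmp_mono:
  assumes ab: "a < b" and U: "laplace_major a b f U" and V: "laplace_minor a b f V"
    and cd: "a \<le> c" "c \<le> d" "d \<le> b"
  shows "U c - V c \<le> U d - V d"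
proof -
  have cU: "continuous_on {a..b} U" and cV: "continuous_on {a..b} V"
    using U V unfolding laplace_major_def laplace_minor_def by auto
  have "(\<lambda>y. U y - 1 * V y) c \<le> (\<lambda>y. U y - 1 * V y) d"
  proof (rule mono_thm[OF _ _ cd])
    show "continuous_on {a..b} (\<lambda>y. U y - 1 * V y)" by (intro continuous_intros cU cV)
    fix x assume x: "a \<le> x" "x < b"
    have A: "ereal (f x) \<le> Liminf at_top (\<lambda>s. ereal (laplace_right b U x s))"
      using U x unfolding major_iff[OF ab] by auto
    have B: "Limsup at_top (\<lambda>s. ereal (laplace_right b V x s)) \<le> ereal (f x)"
      using V x unfolding minor_iff[OF ab] by auto
    have "ereal ((1 - 1) * f x) \<le> Liminf at_top (\<lambda>s. ereal (1 * laplace_right b U x s - 1 * laplace_right b V x s + 0))"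
      by (rule liminf_comb[OF _ _ A B]) auto
    then show "0 \<le> Liminf at_top (\<lambda>s. ereal (laplace_right b (\<lambda>y. U y - 1 * V y) x s))"
      unfolding laplace_right_lin[OF cU cV x(1)] by (simp add: zero_ereal_def)
  qed
  then show ?thesis by simp
qed

lemma prod_integrable:
  fixes U g :: "real \<Rightarrow> real"
  assumes cU: "continuous_on {a..b} U" and gi: "g integrable_on {a..b}"
    and gK: "\<And>u. u \<in> {a..b} \<Longrightarrow> \<bar>g u\<bar> \<le> K"
  shows "(\<lambda>u. U u * g u) integrable_on {a..b}"
proof -
  have "g absolutely_integrable_on {a..b}"
    by (rule absolutely_integrable_integrable_bound[where g="\<lambda>_. K"]) (use gK gi in auto)
  moreover have "U \<in> borel_measurable (lebesgue_on {a..b})"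
    by (rule continuous_imp_measurable_on_sets_lebesgue[OF cU]) auto
  moreover have "bounded (U ` {a..b})"
    by (rule compact_imp_bounded[OF compact_continuous_image[OF cU compact_Icc]])
  ultimately have "(\<lambda>u. U u * g u) absolutely_integrable_on {a..b}"
    by (intro absolutely_integrable_bounded_measurable_product_real) auto
  then show ?thesis using set_lebesgue_integral_eq_integral(1) by blast
qed

lemma rem_bound:
  fixes U g :: "real \<Rightarrow> real"
  assumes gi: "g integrable_on {a..b}" and gK: "\<And>u. u \<in> {a..b} \<Longrightarrow> \<bar>g u\<bar> \<le> K"
    and ugi: "(\<lambda>u. U u * g u) integrable_on {a..b}"
    and xy: "a \<le> x" "x \<le> y" "y \<le> b" and w: "w \<in> {x..y}"
    and close: "\<And>u. u \<in> {x..y} \<Longrightarrow> \<bar>U u - U w\<bar> \<le> \<eta>"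
  shows "\<bar>U w * (integral {a..y} g - integral {a..x} g)
          - (integral {a..y} (\<lambda>u. U u * g u) - integral {a..x} (\<lambda>u. U u * g u))\<bar> \<le> \<eta> * K * (y - x)"
proof -
  have sub: "{a..y} \<subseteq> {a..b}" "{x..y} \<subseteq> {a..b}" using xy by auto
  have g1: "g integrable_on {a..y}" "g integrable_on {x..y}"
    using integrable_on_subinterval[OF gi] sub by auto
  have u1: "(\<lambda>u. U u * g u) integrable_on {a..y}" "(\<lambda>u. U u * g u) integrable_on {x..y}"
    using integrable_on_subinterval[OF ugi] sub by auto
  have eg: "integral {a..y} g - integral {a..x} g = integral {x..y} g"
    using Henstock_Kurzweil_Integration.integral_combine[OF xy(1,2) g1(1)] by simp
  have eu: "integral {a..y} (\<lambda>u. U u * g u) - integral {a..x} (\<lambda>u. U u * g u) = integral {x..y} (\<lambda>u. U u * g u)"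
    using Henstock_Kurzweil_Integration.integral_combine[OF xy(1,2) u1(1)] by simp
  have i3: "(\<lambda>u. U w * g u) integrable_on {x..y}" using g1(2) by (rule integrable_on_mult_right)
  have "U w * integral {x..y} g - integral {x..y} (\<lambda>u. U u * g u) = integral {x..y} (\<lambda>u. U w * g u - U u * g u)"
    using integral_diff[OF i3 u1(2)] by simp
  also have "\<dots> = integral {x..y} (\<lambda>u. (U w - U u) * g u)" by (simp add: algebra_simps)
  finally have eq: "U w * integral {x..y} g - integral {x..y} (\<lambda>u. U u * g u) = integral {x..y} (\<lambda>u. (U w - U u) * g u)" .
  have i4: "(\<lambda>u. (U w - U u) * g u) integrable_on {x..y}"
    using integrable_diff[OF i3 u1(2)] by (simp add: algebra_simps)
  have pw: "\<bar>(U w - U u) * g u\<bar> \<le> \<eta> * K" if "u \<in> {x..y}" for u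
  proof -
    have "\<bar>U w - U u\<bar> \<le> \<eta>" using close[OF that] by simp
    moreover have "\<bar>g u\<bar> \<le> K" using gK that sub by auto
    ultimately show ?thesis unfolding abs_mult by (intro mult_mono) auto
  qed
  have ic: "(\<lambda>u. \<eta> * K) integrable_on {x..y}" by (rule integrable_const_ivl)
  have "integral {x..y} (\<lambda>u. (U w - U u) * g u) \<le> integral {x..y} (\<lambda>u. \<eta> * K)"
    by (rule integral_le[OF i4 ic]) (use pw in \<open>auto simp: abs_le_iff\<close>)
  moreover have "integral {x..y} (\<lambda>u. - (\<eta> * K)) \<le> integral {x..y} (\<lambda>u. (U w - U u) * g u)"
    by (rule integral_le[OF _ i4]) (use pw in \<open>force simp: abs_le_iff\<close>)+
  ultimately have "\<bar>integral {x..y} (\<lambda>u. (U w - U u) * g u)\<bar> \<le> \<eta> * K * (y - x)"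
    using xy by (simp add: abs_le_iff algebra_simps)
  then show ?thesis unfolding eg eu eq .
qed



lemma prod_right:
  fixes U g :: "real \<Rightarrow> real"
  assumes cU: "continuous_on {a..b} U" and gi: "g integrable_on {a..b}"
    and gK: "\<And>u. u \<in> {a..b} \<Longrightarrow> \<bar>g u\<bar> \<le> K" and x: "a \<le> x" "x < b"
  shows "((\<lambda>s. laplace_right b (\<lambda>y. U y * (integral {a..y} g + c) - integral {a..y} (\<lambda>u. U u * g u)) x s
            - (integral {a..x} g + c) * laplace_right b U x s) \<longlongrightarrow> 0) at_top"
proof -
  define G where "G y = integral {a..y} g" for y
  define P where "P y = integral {a..y} (\<lambda>u. U u * g u)" for y
  have ugi: "(\<lambda>u. U u * g u) integrable_on {a..b}" by (rule prod_integrable[OF cU gi gK])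
  have cG: "continuous_on {a..b} G" unfolding G_def by (rule indefinite_integral_continuous_1[OF gi])
  have cP: "continuous_on {a..b} P" unfolding P_def by (rule indefinite_integral_continuous_1[OF ugi])
  have K0: "K \<ge> 0" using gK[of a] x by force
  define R where "R t = U (x + t) * (G (x + t) - G x) - (P (x + t) - P x)" for t
  have bx: "b - x > 0" using x by simp
  have cR: "continuous_on {0..b - x} R"
    unfolding R_def by (intro continuous_intros cont_right[OF cU x(1)] cont_right[OF cG x(1)] cont_right[OF cP x(1)])
  have key: "laplace_right b (\<lambda>y. U y * (G y + c) - P y) x s - (G x + c) * laplace_right b U x s
      = s\<^sup>2 * integral {0..b - x} (\<lambda>t. exp (- s * t) * R t)" for s
  proof -
    have i1: "(\<lambda>t. (G x + c) * (exp (- s * t) * (U (x + t) - U x))) integrable_on {0..b - x}"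
      by (intro integrable_continuous_interval continuous_intros cont_right[OF cU x(1)])
    have i2: "(\<lambda>t. exp (- s * t) * R t) integrable_on {0..b - x}"
      by (intro integrable_continuous_interval continuous_intros cR)
    have "integral {0..b - x} (\<lambda>t. exp (- s * t) * (U (x + t) * (G (x + t) + c) - P (x + t) - (U x * (G x + c) - P x)))
       = integral {0..b - x} (\<lambda>t. (G x + c) * (exp (- s * t) * (U (x + t) - U x)) + exp (- s * t) * R t)"
      unfolding R_def by (simp add: algebra_simps)
    also have "\<dots> = (G x + c) * integral {0..b - x} (\<lambda>t. exp (- s * t) * (U (x + t) - U x)) + integral {0..b - x} (\<lambda>t. exp (- s * t) * R t)"
      by (subst integral_add[OF i1 i2]) simp
    finally show ?thesis unfolding laplace_right_def by (simp only:) (simp add: algebra_simps)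
  qed
  have small: "\<exists>h>0. \<forall>t\<in>{0..b - x}. t \<le> h \<longrightarrow> \<bar>R t\<bar> \<le> \<eta> * t" if \<eta>: "\<eta> > 0" for \<eta>
  proof -
    define \<eta>' where "\<eta>' = \<eta> / (K + 1)"
    have \<eta>': "\<eta>' > 0" "\<eta>' * K \<le> \<eta>" unfolding \<eta>'_def using \<eta> K0 by (auto simp: field_simps)
    have "x \<in> {a..b}" using x by simp
    then obtain d where d: "d > 0" "\<forall>u\<in>{a..b}. dist u x < d \<longrightarrow> dist (U u) (U x) < \<eta>' / 2"
      using cU \<eta>' unfolding continuous_on_iff by (metis half_gt_zero)
    show ?thesis
    proof (intro exI[of _ "d/2"] conjI ballI impI)
      fix t assume t: "t \<in> {0..b - x}" "t \<le> d / 2"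
      have cl: "\<bar>U u - U (x + t)\<bar> \<le> \<eta>'" if "u \<in> {x..x + t}" for u
      proof -
        have "dist (U u) (U x) < \<eta>' / 2" using d that t x by (auto simp: dist_real_def)
        moreover have "dist (U (x + t)) (U x) < \<eta>' / 2" using d t x by (auto simp: dist_real_def)
        ultimately show ?thesis unfolding dist_real_def by argo
      qed
      have "\<bar>U (x + t) * (integral {a..x + t} g - integral {a..x} g)
          - (integral {a..x + t} (\<lambda>u. U u * g u) - integral {a..x} (\<lambda>u. U u * g u))\<bar> \<le> \<eta>' * K * (x + t - x)"
        by (rule rem_bound[OF gi gK ugi]) (use x t cl in auto)
      then have "\<bar>R t\<bar> \<le> \<eta>' * K * t" unfolding R_def G_def P_def by simp
      also have "\<dots> \<le> \<eta> * t" using \<eta>' t by (intro mult_right_mono) auto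
      finally show "\<bar>R t\<bar> \<le> \<eta> * t" .
    qed (use d in simp)
  qed
  have "((\<lambda>s. s\<^sup>2 * integral {0..b - x} (\<lambda>t. exp (- s * t) * R t)) \<longlongrightarrow> 0) at_top"
    by (rule vanish[OF bx cR small])
  then show ?thesis unfolding G_def[symmetric] P_def[symmetric] key .
qed

lemma prod_left:
  fixes U g :: "real \<Rightarrow> real"
  assumes cU: "continuous_on {a..b} U" and gi: "g integrable_on {a..b}"
    and gK: "\<And>u. u \<in> {a..b} \<Longrightarrow> \<bar>g u\<bar> \<le> K" and x: "a < x" "x \<le> b"
  shows "((\<lambda>s. laplace_left a (\<lambda>y. U y * (integral {a..y} g + c) - integral {a..y} (\<lambda>u. U u * g u)) x s
            - (integral {a..x} g + c) * laplace_left a U x s) \<longlongrightarrow> 0) at_top"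
proof -
  define G where "G y = integral {a..y} g" for y
  define P where "P y = integral {a..y} (\<lambda>u. U u * g u)" for y
  have ugi: "(\<lambda>u. U u * g u) integrable_on {a..b}" by (rule prod_integrable[OF cU gi gK])
  have cG: "continuous_on {a..b} G" unfolding G_def by (rule indefinite_integral_continuous_1[OF gi])
  have cP: "continuous_on {a..b} P" unfolding P_def by (rule indefinite_integral_continuous_1[OF ugi])
  have K0: "K \<ge> 0" using gK[of a] x by force
  define R where "R t = U (x - t) * (G (x - t) - G x) - (P (x - t) - P x)" for t
  have bx: "x - a > 0" using x by simp
  have cR: "continuous_on {0..x - a} R"
    unfolding R_def by (intro continuous_intros cont_left[OF cU x(2)] cont_left[OF cG x(2)] cont_left[OF cP x(2)])
  have key: "laplace_left a (\<lambda>y. U y * (G y + c) - P y) x s - (G x + c) * laplace_left a U x s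
      = - (s\<^sup>2 * integral {0..x - a} (\<lambda>t. exp (- s * t) * R t))" for s
  proof -
    have i1: "(\<lambda>t. (G x + c) * (exp (- s * t) * (U (x - t) - U x))) integrable_on {0..x - a}"
      by (intro integrable_continuous_interval continuous_intros cont_left[OF cU x(2)])
    have i2: "(\<lambda>t. exp (- s * t) * R t) integrable_on {0..x - a}"
      by (intro integrable_continuous_interval continuous_intros cR)
    have "integral {0..x - a} (\<lambda>t. exp (- s * t) * (U (x - t) * (G (x - t) + c) - P (x - t) - (U x * (G x + c) - P x)))
       = integral {0..x - a} (\<lambda>t. (G x + c) * (exp (- s * t) * (U (x - t) - U x)) + exp (- s * t) * R t)"
      unfolding R_def by (simp add: algebra_simps)
    also have "\<dots> = (G x + c) * integral {0..x - a} (\<lambda>t. exp (- s * t) * (U (x - t) - U x)) + integral {0..x - a} (\<lambda>t. exp (- s * t) * R t)"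
      by (subst integral_add[OF i1 i2]) simp
    finally show ?thesis unfolding laplace_left_def by (simp only:) (simp add: algebra_simps)
  qed
  have small: "\<exists>h>0. \<forall>t\<in>{0..x - a}. t \<le> h \<longrightarrow> \<bar>R t\<bar> \<le> \<eta> * t" if \<eta>: "\<eta> > 0" for \<eta>
  proof -
    define \<eta>' where "\<eta>' = \<eta> / (K + 1)"
    have \<eta>': "\<eta>' > 0" "\<eta>' * K \<le> \<eta>" unfolding \<eta>'_def using \<eta> K0 by (auto simp: field_simps)
    have "x \<in> {a..b}" using x by simp
    then obtain d where d: "d > 0" "\<forall>u\<in>{a..b}. dist u x < d \<longrightarrow> dist (U u) (U x) < \<eta>' / 2"
      using cU \<eta>' unfolding continuous_on_iff by (metis half_gt_zero)
    show ?thesis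
    proof (intro exI[of _ "d/2"] conjI ballI impI)
      fix t assume t: "t \<in> {0..x - a}" "t \<le> d / 2"
      have cl: "\<bar>U u - U (x - t)\<bar> \<le> \<eta>'" if "u \<in> {x - t..x}" for u
      proof -
        have "dist (U u) (U x) < \<eta>' / 2" using d that t x by (auto simp: dist_real_def)
        moreover have "dist (U (x - t)) (U x) < \<eta>' / 2" using d t x by (auto simp: dist_real_def)
        ultimately show ?thesis unfolding dist_real_def by argo
      qed
      have "\<bar>U (x - t) * (integral {a..x} g - integral {a..x - t} g)
          - (integral {a..x} (\<lambda>u. U u * g u) - integral {a..x - t} (\<lambda>u. U u * g u))\<bar> \<le> \<eta>' * K * (x - (x - t))"
        by (rule rem_bound[OF gi gK ugi]) (use x t cl in auto)
      then have "\<bar>R t\<bar> \<le> \<eta>' * K * t" unfolding R_def G_def P_def by (simp add: abs_minus_commute algebra_simps)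
      also have "\<dots> \<le> \<eta> * t" using \<eta>' t by (intro mult_right_mono) auto
      finally show "\<bar>R t\<bar> \<le> \<eta> * t" .
    qed (use d in simp)
  qed
  have "((\<lambda>s. - (s\<^sup>2 * integral {0..x - a} (\<lambda>t. exp (- s * t) * R t))) \<longlongrightarrow> - 0) at_top"
    by (rule tendsto_minus[OF vanish[OF bx cR small]])
  then show ?thesis unfolding G_def[symmetric] P_def[symmetric] key by simp
qed



lemma prod_major:
  fixes f U V g :: "real \<Rightarrow> real"
  assumes ab: "a < b" and U: "laplace_major a b f U" and V: "laplace_minor a b f V"
    and gi: "g integrable_on {a..b}" and gK: "\<And>u. u \<in> {a..b} \<Longrightarrow> \<bar>g u\<bar> \<le> K"
    and c0: "c \<ge> 0" and Gc: "\<And>x. x \<in> {a..b} \<Longrightarrow> 0 \<le> integral {a..x} g + c"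
  shows "laplace_major a b (\<lambda>x. f x * integral {a..x} g)
     (\<lambda>y. U y * (integral {a..y} g + c) - integral {a..y} (\<lambda>u. U u * g u) - c * V y)"
proof -
  have cU: "continuous_on {a..b} U" and cV: "continuous_on {a..b} V"
    using U V unfolding laplace_major_def laplace_minor_def by auto
  have ugi: "(\<lambda>u. U u * g u) integrable_on {a..b}" by (rule prod_integrable[OF cU gi gK])
  have cG: "continuous_on {a..b} (\<lambda>y. integral {a..y} g)" by (rule indefinite_integral_continuous_1[OF gi])
  have cP: "continuous_on {a..b} (\<lambda>y. integral {a..y} (\<lambda>u. U u * g u))" by (rule indefinite_integral_continuous_1[OF ugi])
  define W0 where "W0 = (\<lambda>y. U y * (integral {a..y} g + c) - integral {a..y} (\<lambda>u. U u * g u))"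
  have cW0: "continuous_on {a..b} W0" unfolding W0_def by (intro continuous_intros cU cG cP)
  have eqW: "(\<lambda>y. U y * (integral {a..y} g + c) - integral {a..y} (\<lambda>u. U u * g u) - c * V y) = (\<lambda>y. W0 y - c * V y)"
    by (simp add: W0_def)
  show ?thesis unfolding eqW major_iff[OF ab]
  proof (intro conjI allI impI)
    show "continuous_on {a..b} (\<lambda>y. W0 y - c * V y)" by (intro continuous_intros cW0 cV)
  next
    fix x assume x: "a \<le> x \<and> x < b"
    define r where "r s = laplace_right b W0 x s - (integral {a..x} g + c) * laplace_right b U x s" for s
    have r: "(r \<longlongrightarrow> 0) at_top" unfolding r_def W0_def
      by (rule prod_right[OF cU gi gK]) (use x in auto)
    have A: "ereal (f x) \<le> Liminf at_top (\<lambda>s. ereal (laplace_right b U x s))"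
      using U x unfolding major_iff[OF ab] by auto
    have B: "Limsup at_top (\<lambda>s. ereal (laplace_right b V x s)) \<le> ereal (f x)"
      using V x unfolding minor_iff[OF ab] by auto
    have "ereal (((integral {a..x} g + c) - c) * f x) \<le> Liminf at_top (\<lambda>s. ereal ((integral {a..x} g + c) * laplace_right b U x s - c * laplace_right b V x s + r s))"
      by (rule liminf_comb[OF _ c0 A B r]) (use Gc x in auto)
    moreover have "laplace_right b (\<lambda>y. W0 y - c * V y) x s = (integral {a..x} g + c) * laplace_right b U x s - c * laplace_right b V x s + r s" for s
    proof -
      have "laplace_right b (\<lambda>y. W0 y - c * V y) x s = laplace_right b W0 x s - c * laplace_right b V x s"
        by (rule laplace_right_lin[OF cW0 cV]) (use x in simp)
      then show ?thesis unfolding r_def by simp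
    qed
    ultimately show "ereal (f x * integral {a..x} g) \<le> Liminf at_top (\<lambda>s. ereal (laplace_right b (\<lambda>y. W0 y - c * V y) x s))"
      by (simp add: mult.commute)
  next
    fix x assume x: "a < x \<and> x \<le> b"
    define r where "r s = laplace_left a W0 x s - (integral {a..x} g + c) * laplace_left a U x s" for s
    have r: "(r \<longlongrightarrow> 0) at_top" unfolding r_def W0_def
      by (rule prod_left[OF cU gi gK]) (use x in auto)
    have A: "ereal (f x) \<le> Liminf at_top (\<lambda>s. ereal (laplace_left a U x s))"
      using U x unfolding major_iff[OF ab] by auto
    have B: "Limsup at_top (\<lambda>s. ereal (laplace_left a V x s)) \<le> ereal (f x)"
      using V x unfolding minor_iff[OF ab] by auto
    have "ereal (((integral {a..x} g + c) - c) * f x) \<le> Liminf at_top (\<lambda>s. ereal ((integral {a..x} g + c) * laplace_left a U x s - c * laplace_left a V x s + r s))"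
      by (rule liminf_comb[OF _ c0 A B r]) (use Gc x in auto)
    moreover have "laplace_left a (\<lambda>y. W0 y - c * V y) x s = (integral {a..x} g + c) * laplace_left a U x s - c * laplace_left a V x s + r s" for s
    proof -
      have "laplace_left a (\<lambda>y. W0 y - c * V y) x s = laplace_left a W0 x s - c * laplace_left a V x s"
        by (rule laplace_left_lin[OF cW0 cV]) (use x in simp)
      then show ?thesis unfolding r_def by simp
    qed
    ultimately show "ereal (f x * integral {a..x} g) \<le> Liminf at_top (\<lambda>s. ereal (laplace_left a (\<lambda>y. W0 y - c * V y) x s))"
      by (simp add: mult.commute)
  qed
qed

lemma prod_minor:
  fixes f U V g :: "real \<Rightarrow> real"
  assumes ab: "a < b" and U: "laplace_major a b f U" and V: "laplace_minor a b f V"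
    and gi: "g integrable_on {a..b}" and gK: "\<And>u. u \<in> {a..b} \<Longrightarrow> \<bar>g u\<bar> \<le> K"
    and c0: "c \<ge> 0" and Gc: "\<And>x. x \<in> {a..b} \<Longrightarrow> 0 \<le> integral {a..x} g + c"
  shows "laplace_minor a b (\<lambda>x. f x * integral {a..x} g)
     (\<lambda>y. V y * (integral {a..y} g + c) - integral {a..y} (\<lambda>u. V u * g u) - c * U y)"
proof -
  have U': "laplace_minor a b (\<lambda>x. - f x) (\<lambda>x. - U x)"
    using U minor_neg[OF ab, of "\<lambda>x. - f x" "\<lambda>x. - U x"] by simp
  have V': "laplace_major a b (\<lambda>x. - f x) (\<lambda>x. - V x)"
    using V minor_neg[OF ab] by simp
  have "laplace_major a b (\<lambda>x. - f x * integral {a..x} g)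
     (\<lambda>y. - V y * (integral {a..y} g + c) - integral {a..y} (\<lambda>u. - V u * g u) - c * - U y)"
    by (rule prod_major[OF ab V' U' gi gK c0 Gc])
  moreover have "(\<lambda>y. - V y * (integral {a..y} g + c) - integral {a..y} (\<lambda>u. - V u * g u) - c * - U y)
     = (\<lambda>y. - (V y * (integral {a..y} g + c) - integral {a..y} (\<lambda>u. V u * g u) - c * U y))"
    by (simp add: fun_eq_iff)
  ultimately show ?thesis
    using minor_neg[OF ab] by simp
qed

lemma shift_major:
  assumes "laplace_major a b f U" shows "laplace_major a b f (\<lambda>y. U y - k)"
proof -
  have "laplace_right b (\<lambda>y. U y - k) x s = laplace_right b U x s" for x s
    unfolding laplace_right_def by simp
  moreover have "laplace_left a (\<lambda>y. U y - k) x s = laplace_left a U x s" for x s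
    unfolding laplace_left_def by simp
  moreover have "continuous_on {a..b} (\<lambda>y. U y - k)"
    using assms unfolding laplace_major_def by (auto intro: continuous_intros)
  ultimately have "lower_LD a b (\<lambda>y. U y - k) x = lower_LD a b U x" for x
    unfolding lower_LD_def by simp
  with \<open>continuous_on {a..b} (\<lambda>y. U y - k)\<close> show ?thesis using assms unfolding laplace_major_def by simp
qed

lemma shift_minor:
  assumes "laplace_minor a b f U" shows "laplace_minor a b f (\<lambda>y. U y - k)"
proof -
  have "laplace_right b (\<lambda>y. U y - k) x s = laplace_right b U x s" for x s
    unfolding laplace_right_def by simp
  moreover have "laplace_left a (\<lambda>y. U y - k) x s = laplace_left a U x s" for x s
    unfolding laplace_left_def by simp
  moreover have "continuous_on {a..b} (\<lambda>y. U y - k)"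
    using assms unfolding laplace_minor_def by (auto intro: continuous_intros)
  ultimately have "upper_LD a b (\<lambda>y. U y - k) x = upper_LD a b U x" for x
    unfolding upper_LD_def by simp
  with \<open>continuous_on {a..b} (\<lambda>y. U y - k)\<close> show ?thesis using assms unfolding laplace_minor_def by simp
qed

lemma cmp_delta:
  assumes "a < b" "laplace_major a b f U" "laplace_minor a b f V"
  shows "V b - V a \<le> U b - U a"
  using cmp_mono[OF assms, of a b] assms(1) by simp

lemma integrable_crit:
  assumes ab: "a < b"
    and ex: "\<And>e. e > 0 \<Longrightarrow> \<exists>W Z. laplace_major a b h W \<and> laplace_minor a b h Z \<and> (W b - W a) - (Z b - Z a) \<le> e"
  shows "laplace_integrable a b h"
proof -
  have le: "laplace_lower a b h \<le> laplace_upper a b h"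
    unfolding laplace_lower_def laplace_upper_def
    by (intro SUP_least INF_greatest) (use cmp_delta[OF ab] in auto)
  have ge: "laplace_upper a b h \<le> laplace_lower a b h + ereal e" if e: "e > 0" for e
  proof -
    obtain W Z where WZ: "laplace_major a b h W" "laplace_minor a b h Z" "(W b - W a) - (Z b - Z a) \<le> e"
      using ex[OF e] by blast
    have "laplace_upper a b h \<le> ereal (W b - W a)"
      unfolding laplace_upper_def by (rule INF_lower) (use WZ in auto)
    also have "\<dots> \<le> ereal (Z b - Z a) + ereal e" using WZ by simp
    also have "ereal (Z b - Z a) \<le> laplace_lower a b h"
      unfolding laplace_lower_def by (rule SUP_upper) (use WZ in auto)
    finally show ?thesis by (simp add: add_right_mono)
  qed
  have eq: "laplace_lower a b h = laplace_upper a b h"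
    using le ereal_le_epsilon2[of "laplace_upper a b h" "laplace_lower a b h"] ge by (simp add: antisym)
  obtain W Z where WZ: "laplace_major a b h W" "laplace_minor a b h Z"
    using ex[of 1] by auto
  have "laplace_upper a b h \<le> ereal (W b - W a)"
    unfolding laplace_upper_def by (rule INF_lower) (use WZ in auto)
  moreover have "ereal (Z b - Z a) \<le> laplace_lower a b h"
    unfolding laplace_lower_def by (rule SUP_upper) (use WZ in auto)
  ultimately have "\<bar>laplace_upper a b h\<bar> \<noteq> \<infinity>" using eq
    by (cases "laplace_upper a b h") auto
  then show ?thesis unfolding laplace_integrable_def using eq by simp
qed

lemma integral_bounds:
  assumes ab: "a < b" and hi: "laplace_integrable a b h"
    and W: "laplace_major a b h W" and Z: "laplace_minor a b h Z"
  shows "Z b - Z a \<le> laplace_integral a b h" "laplace_integral a b h \<le> W b - W a"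
proof -
  have eq: "laplace_lower a b h = laplace_upper a b h" and fin: "\<bar>laplace_upper a b h\<bar> \<noteq> \<infinity>"
    using hi unfolding laplace_integrable_def by auto
  have u: "laplace_upper a b h \<le> ereal (W b - W a)"
    unfolding laplace_upper_def by (rule INF_lower) (use W in auto)
  have l: "ereal (Z b - Z a) \<le> laplace_upper a b h"
    unfolding eq[symmetric] laplace_lower_def by (rule SUP_upper) (use Z in auto)
  show "Z b - Z a \<le> laplace_integral a b h" "laplace_integral a b h \<le> W b - W a"
    unfolding laplace_integral_def using u l fin by (cases "laplace_upper a b h"; auto)+
qed



lemma vs_snoc:
  assumes "xs \<noteq> []"
  shows "variation_sum g (xs @ [y]) = variation_sum g xs + \<bar>g y - g (last xs)\<bar>"
proof -
  obtain m where m: "length xs = Suc m" using assms by (cases xs) auto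
  have "variation_sum g (xs @ [y]) = (\<Sum>i<Suc m. \<bar>g ((xs @ [y]) ! Suc i) - g ((xs @ [y]) ! i)\<bar>)"
    unfolding variation_sum_def using m by simp
  also have "\<dots> = (\<Sum>i<m. \<bar>g ((xs @ [y]) ! Suc i) - g ((xs @ [y]) ! i)\<bar>) + \<bar>g y - g (xs ! m)\<bar>"
    using m by (simp add: nth_append)
  also have "(\<Sum>i<m. \<bar>g ((xs @ [y]) ! Suc i) - g ((xs @ [y]) ! i)\<bar>) = (\<Sum>i<m. \<bar>g (xs ! Suc i) - g (xs ! i)\<bar>)"
    using m by (intro sum.cong) (auto simp: nth_append)
  also have "xs ! m = last xs" using m assms by (simp add: last_conv_nth)
  finally show ?thesis unfolding variation_sum_def using m by simp
qed

lemma sorted_le_last: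
  assumes "sorted_wrt (<) (xs :: real list)" "xs \<noteq> []" "u \<in> set xs"
  shows "u \<le> last xs"
proof -
  have "xs = butlast xs @ [last xs]" using assms(2) by simp
  then have "sorted_wrt (<) (butlast xs @ [last xs])" using assms(1) by simp
  then have "\<forall>v\<in>set (butlast xs). v < last xs" by (simp add: sorted_wrt_append)
  moreover have "u \<in> set (butlast xs) \<or> u = last xs"
    using assms(2,3) by (metis \<open>xs = butlast xs @ [last xs]\<close> rotate1.simps(2) set_ConsD set_rotate1)
  ultimately show ?thesis by auto
qed

lemma part_snoc:
  assumes "xs \<in> partitions a x" "x < y"
  shows "xs @ [y] \<in> partitions a y"
proof -
  have xs: "xs \<noteq> []" "hd xs = a" "last xs = x" "sorted_wrt (<) xs"
    using assms(1) unfolding partitions_def by auto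
  have "\<forall>u\<in>set xs. u < y" using sorted_le_last[OF xs(4) xs(1)] xs(3) assms(2) by force
  then show ?thesis using xs unfolding partitions_def by (auto simp: sorted_wrt_append)
qed

lemma vs_nonneg: "variation_sum g xs \<ge> 0"
  unfolding variation_sum_def by (intro sum_nonneg) auto

lemma bv_facts:
  fixes g :: "real \<Rightarrow> real"
  assumes ab: "a < b" and M: "\<And>xs. xs \<in> partitions a b \<Longrightarrow> variation_sum g xs \<le> M"
  shows "g integrable_on {a..b}" "\<And>x. x \<in> {a..b} \<Longrightarrow> \<bar>g x - g a\<bar> \<le> M"
proof -
  define v where "v x = Sup (variation_sum g ` partitions a x)" for x
  have pa: "[a] \<in> partitions a a" unfolding partitions_def by simp
  have ne: "partitions a x \<noteq> {}" if "a \<le> x" for x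
  proof (cases "a = x")
    case True then show ?thesis using pa by auto
  next
    case False then have "[a, x] \<in> partitions a x" using that unfolding partitions_def by auto
    then show ?thesis by auto
  qed
  have bd: "variation_sum g xs \<le> M" if "x \<in> {a..b}" "xs \<in> partitions a x" for x xs
  proof (cases "x = b")
    case True then show ?thesis using M that by simp
  next
    case False
    then have "xs @ [b] \<in> partitions a b" using part_snoc[OF that(2)] that(1) by simp
    then have "variation_sum g (xs @ [b]) \<le> M" by (rule M)
    moreover have "xs \<noteq> []" using that(2) unfolding partitions_def by auto
    ultimately show ?thesis using vs_snoc[of xs g b] by simp
  qed
  have bdd: "bdd_above (variation_sum g ` partitions a x)" if "x \<in> {a..b}" for x
    using bd[OF that] by (intro bdd_aboveI[of _ M]) auto
  have vM: "v x \<le> M" if "x \<in> {a..b}" for x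
    unfolding v_def using bd[OF that] ne[of x] that by (intro cSup_least) auto
  have key: "v x + \<bar>g y - g x\<bar> \<le> v y" if "a \<le> x" "x < y" "y \<le> b" for x y
  proof -
    have "v x \<le> v y - \<bar>g y - g x\<bar>"
      unfolding v_def
    proof (rule cSup_least)
      show "variation_sum g ` partitions a x \<noteq> {}" using ne[OF that(1)] by simp
      fix z assume "z \<in> variation_sum g ` partitions a x"
      then obtain xs where xs: "xs \<in> partitions a x" "z = variation_sum g xs" by auto
      have sn: "xs @ [y] \<in> partitions a y" by (rule part_snoc[OF xs(1) that(2)])
      have "xs \<noteq> []" "last xs = x" using xs(1) unfolding partitions_def by auto
      then have "variation_sum g (xs @ [y]) = z + \<bar>g y - g x\<bar>" using vs_snoc[of xs g y] xs(2) by simp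
      moreover have "variation_sum g (xs @ [y]) \<le> Sup (variation_sum g ` partitions a y)"
        using sn that by (intro cSup_upper bdd) auto
      ultimately show "z \<le> Sup (variation_sum g ` partitions a y) - \<bar>g y - g x\<bar>" by simp
    qed
    then show ?thesis by simp
  qed
  have va: "v a \<ge> 0"
  proof -
    have "variation_sum g [a] \<le> v a" unfolding v_def using pa ab by (intro cSup_upper bdd) auto
    then show ?thesis using vs_nonneg[of g "[a]"] by simp
  qed
  have m1: "mono_on {a..b} v"
  proof (rule mono_onI)
    fix x y assume "x \<in> {a..b}" "y \<in> {a..b}" "x \<le> y"
    then show "v x \<le> v y" using key[of x y] by (cases "x = y") auto
  qed
  have m2: "mono_on {a..b} (\<lambda>x. v x - g x)"
  proof (rule mono_onI)
    fix x y assume "x \<in> {a..b}" "y \<in> {a..b}" "x \<le> y"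
    then show "v x - g x \<le> v y - g y" using key[of x y] by (cases "x = y") auto
  qed
  have "(\<lambda>x. v x - (v x - g x)) integrable_on {a..b}"
    by (intro integrable_diff integrable_on_mono_on m1 m2)
  then show "g integrable_on {a..b}" by simp
  fix x assume x: "x \<in> {a..b}"
  show "\<bar>g x - g a\<bar> \<le> M"
  proof (cases "x = a")
    case True then show ?thesis using vM[of a] va ab by simp
  next
    case False
    then have "v a + \<bar>g x - g a\<bar> \<le> v x" using key[of a x] x by auto
    then show ?thesis using vM[OF x] va by simp
  qed
qed



lemma int_abs_bound:
  fixes h :: "real \<Rightarrow> real"
  assumes hi: "h integrable_on {a..b}" and hK: "\<And>u. u \<in> {a..b} \<Longrightarrow> \<bar>h u\<bar> \<le> K"
    and x: "x \<in> {a..b}"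
  shows "\<bar>integral {a..x} h\<bar> \<le> K * (b - a)"
proof -
  have K0: "K \<ge> 0" using hK[OF x] by simp
  have hi': "h integrable_on {a..x}" using integrable_on_subinterval[OF hi] x by auto
  have "integral {a..x} h \<le> integral {a..x} (\<lambda>_. K)"
    by (rule integral_le[OF hi' integrable_const_ivl]) (use hK x in \<open>force simp: abs_le_iff\<close>)
  moreover have "integral {a..x} (\<lambda>_. - K) \<le> integral {a..x} h"
    by (rule integral_le[OF integrable_const_ivl hi']) (use hK x in \<open>force simp: abs_le_iff\<close>)
  ultimately have "\<bar>integral {a..x} h\<bar> \<le> K * (x - a)" using x by (simp add: abs_le_iff algebra_simps)
  also have "\<dots> \<le> K * (b - a)" using x K0 by (intro mult_left_mono) auto
  finally show ?thesis .
qed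

lemma sandwich:
  fixes f U V h :: "real \<Rightarrow> real"
  assumes ab: "a < b" and U: "laplace_major a b f U" and V: "laplace_minor a b f V"
    and Ua: "U a = 0" and Va: "V a = 0" and D: "U b - V b \<le> \<epsilon>"
    and hi: "h integrable_on {a..b}" and hK: "\<And>u. u \<in> {a..b} \<Longrightarrow> \<bar>h u\<bar> \<le> K"
  shows "laplace_major a b (\<lambda>x. f x * integral {a..x} h)
          (\<lambda>y. U y * (integral {a..y} h + K * (b - a)) - integral {a..y} (\<lambda>u. U u * h u) - K * (b - a) * V y)"
    "laplace_minor a b (\<lambda>x. f x * integral {a..x} h)
          (\<lambda>y. V y * (integral {a..y} h + K * (b - a)) - integral {a..y} (\<lambda>u. V u * h u) - K * (b - a) * U y)"
    "(U b * (integral {a..b} h + K * (b - a)) - integral {a..b} (\<lambda>u. U u * h u) - K * (b - a) * V b)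
      - (V b * (integral {a..b} h + K * (b - a)) - integral {a..b} (\<lambda>u. V u * h u) - K * (b - a) * U b)
      \<le> \<epsilon> * (4 * (K * (b - a)))"
    "U a * (integral {a..a} h + K * (b - a)) - integral {a..a} (\<lambda>u. U u * h u) - K * (b - a) * V a = 0"
    "V a * (integral {a..a} h + K * (b - a)) - integral {a..a} (\<lambda>u. V u * h u) - K * (b - a) * U a = 0"
proof -
  define C where "C = K * (b - a)"
  have K0: "K \<ge> 0" using hK[of a] ab by force
  have C0: "C \<ge> 0" unfolding C_def using K0 ab by simp
  have Hb: "\<bar>integral {a..x} h\<bar> \<le> C" if "x \<in> {a..b}" for x
    unfolding C_def by (rule int_abs_bound[OF hi hK that])
  have Gc: "0 \<le> integral {a..x} h + C" if "x \<in> {a..b}" for x using Hb[OF that] by simp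
  show "laplace_major a b (\<lambda>x. f x * integral {a..x} h)
          (\<lambda>y. U y * (integral {a..y} h + K * (b - a)) - integral {a..y} (\<lambda>u. U u * h u) - K * (b - a) * V y)"
    using prod_major[OF ab U V hi hK C0 Gc] unfolding C_def by simp
  show "laplace_minor a b (\<lambda>x. f x * integral {a..x} h)
          (\<lambda>y. V y * (integral {a..y} h + K * (b - a)) - integral {a..y} (\<lambda>u. V u * h u) - K * (b - a) * U y)"
    using prod_minor[OF ab U V hi hK C0 Gc] unfolding C_def by simp
  show "U a * (integral {a..a} h + K * (b - a)) - integral {a..a} (\<lambda>u. U u * h u) - K * (b - a) * V a = 0"
    "V a * (integral {a..a} h + K * (b - a)) - integral {a..a} (\<lambda>u. V u * h u) - K * (b - a) * U a = 0"
    using Ua Va by simp_all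
  have cU: "continuous_on {a..b} U" and cV: "continuous_on {a..b} V"
    using U V unfolding laplace_major_def laplace_minor_def by auto
  have Drange: "0 \<le> U y - V y \<and> U y - V y \<le> \<epsilon>" if "y \<in> {a..b}" for y
    using cmp_mono[OF ab U V, of a y] cmp_mono[OF ab U V, of y b] that Ua Va D by auto
  have e0: "\<epsilon> \<ge> 0" using Drange[of b] ab by auto
  have i1: "(\<lambda>u. U u * h u) integrable_on {a..b}" by (rule prod_integrable[OF cU hi hK])
  have i2: "(\<lambda>u. V u * h u) integrable_on {a..b}" by (rule prod_integrable[OF cV hi hK])
  define Q where "Q = integral {a..b} (\<lambda>u. (U u - V u) * h u)"
  have PQ: "integral {a..b} (\<lambda>u. U u * h u) - integral {a..b} (\<lambda>u. V u * h u) = Q"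
    unfolding Q_def using integral_diff[OF i1 i2] by (simp add: algebra_simps)
  have Qb: "\<bar>Q\<bar> \<le> (\<epsilon> * K) * (b - a)" unfolding Q_def
  proof (rule int_abs_bound)
    show "(\<lambda>u. (U u - V u) * h u) integrable_on {a..b}"
      using integrable_diff[OF i1 i2] by (simp add: algebra_simps)
    show "b \<in> {a..b}" using ab by simp
    fix u assume u: "u \<in> {a..b}"
    show "\<bar>(U u - V u) * h u\<bar> \<le> \<epsilon> * K"
      unfolding abs_mult using Drange[OF u] hK[OF u] by (intro mult_mono) auto
  qed
  have Qb': "Q \<ge> - (\<epsilon> * C)" using abs_le_D2[OF Qb] unfolding C_def by (simp add: algebra_simps)
  have t1: "\<bar>(U b - V b) * (integral {a..b} h + C)\<bar> \<le> \<epsilon> * (2 * C)"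
    unfolding abs_mult using Drange[of b] Hb[of b] ab C0 by (intro mult_mono) auto
  have t1': "(U b - V b) * (integral {a..b} h + C) \<le> \<epsilon> * (2 * C)" using abs_le_D1[OF t1] .
  have t2: "C * (U b - V b) \<le> C * \<epsilon>" using Drange[of b] ab C0 by (intro mult_left_mono) auto
  have E: "(U b * (integral {a..b} h + C) - integral {a..b} (\<lambda>u. U u * h u) - C * V b)
      - (V b * (integral {a..b} h + C) - integral {a..b} (\<lambda>u. V u * h u) - C * U b)
      = (U b - V b) * (integral {a..b} h + C) - Q + C * (U b - V b)"
    using PQ by (simp add: algebra_simps)
  have "(U b * (integral {a..b} h + C) - integral {a..b} (\<lambda>u. U u * h u) - C * V b)
      - (V b * (integral {a..b} h + C) - integral {a..b} (\<lambda>u. V u * h u) - C * U b)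
      \<le> \<epsilon> * (4 * C)"
    unfolding E using Qb' t1' t2 by (simp add: algebra_simps)
  then show "(U b * (integral {a..b} h + K * (b - a)) - integral {a..b} (\<lambda>u. U u * h u) - K * (b - a) * V b)
      - (V b * (integral {a..b} h + K * (b - a)) - integral {a..b} (\<lambda>u. V u * h u) - K * (b - a) * U b)
      \<le> \<epsilon> * (4 * (K * (b - a)))"
    unfolding C_def .
qed

lemma f_approx:
  assumes ab: "a < b" and fi: "laplace_integrable a b f" and e: "\<epsilon> > 0"
  shows "\<exists>U V. laplace_major a b f U \<and> laplace_minor a b f V \<and> U a = 0 \<and> V a = 0 \<and> U b - V b \<le> \<epsilon>"
proof -
  have eq: "laplace_lower a b f = laplace_upper a b f" and fin: "\<bar>laplace_upper a b f\<bar> \<noteq> \<infinity>"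
    using fi unfolding laplace_integrable_def by auto
  then obtain I where I: "laplace_upper a b f = ereal I" by (cases "laplace_upper a b f") auto
  have "laplace_upper a b f < ereal (I + \<epsilon> / 2)" using I e by simp
  then obtain U where U: "laplace_major a b f U" "ereal (U b - U a) < ereal (I + \<epsilon> / 2)"
    unfolding laplace_upper_def by (auto simp: INF_less_iff)
  have "ereal (I - \<epsilon> / 2) < laplace_lower a b f" using I eq e by simp
  then obtain V where V: "laplace_minor a b f V" "ereal (I - \<epsilon> / 2) < ereal (V b - V a)"
    unfolding laplace_lower_def by (auto simp: less_SUP_iff)
  show ?thesis
  proof (intro exI conjI)
    show "laplace_major a b f (\<lambda>y. U y - U a)" by (rule shift_major[OF U(1)])
    show "laplace_minor a b f (\<lambda>y. V y - V a)" by (rule shift_minor[OF V(1)])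
    show "(U b - U a) - (V b - V a) \<le> \<epsilon>" using U(2) V(2) by simp
  qed simp_all
qed



theorem theorem7p3:
  fixes a b :: real and f g :: "real \<Rightarrow> real" and gs :: "nat \<Rightarrow> real \<Rightarrow> real"
  assumes "a < b"
    and "laplace_integrable a b f"
    and "\<And>n. bounded_variation_on (gs n) a b"
    and "\<exists>M. \<forall>n. total_variation (gs n) a b \<le> ereal M"
    and "\<And>x. x \<in> {a..b} \<Longrightarrow> (\<lambda>n. gs n x) \<longlonglongrightarrow> g x"
  defines "Gs \<equiv> (\<lambda>n x. integral {a..x} (gs n))"
    and "G \<equiv> (\<lambda>x. integral {a..x} g)"
  shows "(\<forall>n. laplace_integrable a b (\<lambda>x. f x * Gs n x))
    \<and> laplace_integrable a b (\<lambda>x. f x * G x)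
    \<and> (\<lambda>n. laplace_integral a b (\<lambda>x. f x * Gs n x))
        \<longlonglongrightarrow> laplace_integral a b (\<lambda>x. f x * G x)"
proof -
  have ab: "a < b" and fi: "laplace_integrable a b f" using assms(1,2) .
  have conv: "\<And>x. x \<in> {a..b} \<Longrightarrow> (\<lambda>n. gs n x) \<longlonglongrightarrow> g x" by (rule assms(5))
  obtain M where M: "\<forall>n. total_variation (gs n) a b \<le> ereal M" using assms(4) by blast
  have vsM: "variation_sum (gs n) xs \<le> M" if "xs \<in> partitions a b" for n xs
    using M that unfolding total_variation_def by (auto simp: SUP_le_iff)
  have gsi: "gs n integrable_on {a..b}" for n using bv_facts(1)[OF ab vsM] .
  have gsa: "\<bar>gs n x - gs n a\<bar> \<le> M" if "x \<in> {a..b}" for n x using bv_facts(2)[OF ab vsM that] .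
  have "(\<lambda>n. gs n a) \<longlonglongrightarrow> g a" using conv ab by simp
  then have "Bseq (\<lambda>n. gs n a)" by (rule convergent_imp_Bseq[OF convergentI])
  then obtain A where A: "\<And>n. \<bar>gs n a\<bar> \<le> A" unfolding Bseq_def by auto
  define K where "K = A + M"
  have gK: "\<bar>gs n u\<bar> \<le> K" if "u \<in> {a..b}" for n u
    using A[of n] gsa[OF that, of n] unfolding K_def by linarith
  have gK': "\<bar>g u\<bar> \<le> K" if u: "u \<in> {a..b}" for u
    by (rule LIMSEQ_le_const2[OF tendsto_rabs[OF conv[OF u]]]) (use gK[OF u] in auto)
  have gi: "g integrable_on {a..b}"
    by (rule dominated_convergence(1)[of gs "{a..b}" "\<lambda>_. K" g]) (use gsi gK conv in auto)
  define C where "C = K * (b - a)"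
  have K0: "K \<ge> 0" using gK'[of a] ab by force
  have C0: "C \<ge> 0" unfolding C_def using K0 ab by simp
  have integ: "laplace_integrable a b (\<lambda>x. f x * integral {a..x} h)"
    if hi: "h integrable_on {a..b}" and hK: "\<And>u. u \<in> {a..b} \<Longrightarrow> \<bar>h u\<bar> \<le> K" for h
  proof (rule integrable_crit[OF ab])
    fix e :: real assume e: "e > 0"
    define \<epsilon> where "\<epsilon> = e / (4 * C + 1)"
    have \<epsilon>: "\<epsilon> > 0" unfolding \<epsilon>_def using e C0 by simp
    have \<epsilon>C: "\<epsilon> * (4 * C) \<le> e" unfolding \<epsilon>_def using e C0 by (simp add: field_simps)
    obtain U V where UV: "laplace_major a b f U" "laplace_minor a b f V" "U a = 0" "V a = 0" "U b - V b \<le> \<epsilon>"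
      using f_approx[OF ab fi \<epsilon>] by blast
    note S = sandwich[OF ab UV hi hK]
    show "\<exists>W Z. laplace_major a b (\<lambda>x. f x * integral {a..x} h) W \<and> laplace_minor a b (\<lambda>x. f x * integral {a..x} h) Z \<and> W b - W a - (Z b - Z a) \<le> e"
    proof (intro exI conjI)
      show "laplace_major a b (\<lambda>x. f x * integral {a..x} h)
          (\<lambda>y. U y * (integral {a..y} h + K * (b - a)) - integral {a..y} (\<lambda>u. U u * h u) - K * (b - a) * V y)"
        by (rule S(1))
      show "laplace_minor a b (\<lambda>x. f x * integral {a..x} h)
          (\<lambda>y. V y * (integral {a..y} h + K * (b - a)) - integral {a..y} (\<lambda>u. V u * h u) - K * (b - a) * U y)"
        by (rule S(2))
    qed (use S(3) \<epsilon>C UV(3,4) in \<open>simp add: C_def\<close>)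
  qed
  have I1: "\<forall>n. laplace_integrable a b (\<lambda>x. f x * integral {a..x} (gs n))"
    using integ[OF gsi gK] by blast
  have I2: "laplace_integrable a b (\<lambda>x. f x * integral {a..x} g)"
    using integ[OF gi gK'] by blast
  have I3: "(\<lambda>n. laplace_integral a b (\<lambda>x. f x * integral {a..x} (gs n))) \<longlonglongrightarrow> laplace_integral a b (\<lambda>x. f x * integral {a..x} g)"
  proof (rule LIMSEQ_I)
    fix e :: real assume e: "e > 0"
    define \<epsilon> where "\<epsilon> = e / (2 * (4 * C + 1))"
    have \<epsilon>: "\<epsilon> > 0" unfolding \<epsilon>_def using e C0 by simp
    have \<epsilon>C: "\<epsilon> * (4 * C) \<le> e / 2" unfolding \<epsilon>_def using e C0 by (simp add: field_simps)
    obtain U V where UV: "laplace_major a b f U" "laplace_minor a b f V" "U a = 0" "V a = 0" "U b - V b \<le> \<epsilon>"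
      using f_approx[OF ab fi \<epsilon>] by blast
    have cU: "continuous_on {a..b} U" and cV: "continuous_on {a..b} V"
      using UV unfolding laplace_major_def laplace_minor_def by auto
    define Wb where "Wb h = U b * (integral {a..b} h + C) - integral {a..b} (\<lambda>u. U u * h u) - C * V b" for h
    define Zb where "Zb h = V b * (integral {a..b} h + C) - integral {a..b} (\<lambda>u. V u * h u) - C * U b" for h
    have bnds: "Zb h \<le> laplace_integral a b (\<lambda>x. f x * integral {a..x} h) \<and>
        laplace_integral a b (\<lambda>x. f x * integral {a..x} h) \<le> Wb h \<and> Wb h - Zb h \<le> e / 2"
      if hi: "h integrable_on {a..b}" and hK: "\<And>u. u \<in> {a..b} \<Longrightarrow> \<bar>h u\<bar> \<le> K" for h
    proof -
      note S = sandwich[OF ab UV hi hK]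
      have hI: "laplace_integrable a b (\<lambda>x. f x * integral {a..x} h)" by (rule integ[OF hi hK])
      note B = integral_bounds[OF ab hI S(1) S(2)]
      show ?thesis using B S(3) \<epsilon>C UV(3,4) unfolding Wb_def Zb_def C_def by simp
    qed
    have lim1: "(\<lambda>n. integral {a..b} (gs n)) \<longlonglongrightarrow> integral {a..b} g"
      by (rule dominated_convergence(2)[of gs "{a..b}" "\<lambda>_. K" g]) (use gsi gK conv in auto)
    have "compact (U ` {a..b})" by (rule compact_continuous_image[OF cU compact_Icc])
    then obtain BU where BU: "\<forall>y\<in>U ` {a..b}. norm y \<le> BU" using compact_imp_bounded bounded_iff by metis
    have "compact (V ` {a..b})" by (rule compact_continuous_image[OF cV compact_Icc])
    then obtain BV where BV: "\<forall>y\<in>V ` {a..b}. norm y \<le> BV" using compact_imp_bounded bounded_iff by metis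
    have lim2: "(\<lambda>n. integral {a..b} (\<lambda>u. U u * gs n u)) \<longlonglongrightarrow> integral {a..b} (\<lambda>u. U u * g u)"
    proof (rule dominated_convergence(2)[of "\<lambda>n u. U u * gs n u" "{a..b}" "\<lambda>_. BU * K"])
      show "(\<lambda>u. U u * gs n u) integrable_on {a..b}" for n by (rule prod_integrable[OF cU gsi gK])
      show "norm (U u * gs n u) \<le> BU * K" if "u \<in> {a..b}" for n u
        unfolding real_norm_def abs_mult using BU gK[OF that] that by (intro mult_mono) auto
      show "(\<lambda>n. U u * gs n u) \<longlonglongrightarrow> U u * g u" if "u \<in> {a..b}" for u
        by (intro tendsto_mult tendsto_const conv that)
    qed (rule integrable_const_ivl)
    have lim3: "(\<lambda>n. integral {a..b} (\<lambda>u. V u * gs n u)) \<longlonglongrightarrow> integral {a..b} (\<lambda>u. V u * g u)"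
    proof (rule dominated_convergence(2)[of "\<lambda>n u. V u * gs n u" "{a..b}" "\<lambda>_. BV * K"])
      show "(\<lambda>u. V u * gs n u) integrable_on {a..b}" for n by (rule prod_integrable[OF cV gsi gK])
      show "norm (V u * gs n u) \<le> BV * K" if "u \<in> {a..b}" for n u
        unfolding real_norm_def abs_mult using BV gK[OF that] that by (intro mult_mono) auto
      show "(\<lambda>n. V u * gs n u) \<longlonglongrightarrow> V u * g u" if "u \<in> {a..b}" for u
        by (intro tendsto_mult tendsto_const conv that)
    qed (rule integrable_const_ivl)
    have limW: "(\<lambda>n. Wb (gs n)) \<longlonglongrightarrow> Wb g" unfolding Wb_def
      by (intro tendsto_intros lim1 lim2)
    have limZ: "(\<lambda>n. Zb (gs n)) \<longlonglongrightarrow> Zb g" unfolding Zb_def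
      by (intro tendsto_intros lim1 lim3)
    obtain N1 where N1: "\<forall>n\<ge>N1. norm (Wb (gs n) - Wb g) < e / 2" using LIMSEQ_D[OF limW, of "e/2"] e by auto
    obtain N2 where N2: "\<forall>n\<ge>N2. norm (Zb (gs n) - Zb g) < e / 2" using LIMSEQ_D[OF limZ, of "e/2"] e by auto
    show "\<exists>no. \<forall>n\<ge>no. norm (laplace_integral a b (\<lambda>x. f x * integral {a..x} (gs n)) - laplace_integral a b (\<lambda>x. f x * integral {a..x} g)) < e"
    proof (intro exI allI impI)
      fix n assume n: "max N1 N2 \<le> n"
      have w: "\<bar>Wb (gs n) - Wb g\<bar> < e / 2" and z: "\<bar>Zb (gs n) - Zb g\<bar> < e / 2" using N1 N2 n by auto
      have bn: "Zb (gs n) \<le> laplace_integral a b (\<lambda>x. f x * integral {a..x} (gs n)) \<and>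
        laplace_integral a b (\<lambda>x. f x * integral {a..x} (gs n)) \<le> Wb (gs n) \<and> Wb (gs n) - Zb (gs n) \<le> e / 2"
        by (rule bnds[OF gsi gK])
      have bg: "Zb g \<le> laplace_integral a b (\<lambda>x. f x * integral {a..x} g) \<and>
        laplace_integral a b (\<lambda>x. f x * integral {a..x} g) \<le> Wb g \<and> Wb g - Zb g \<le> e / 2"
        by (rule bnds[OF gi gK'])
      show "norm (laplace_integral a b (\<lambda>x. f x * integral {a..x} (gs n)) - laplace_integral a b (\<lambda>x. f x * integral {a..x} g)) < e"
        using w[unfolded abs_less_iff] z[unfolded abs_less_iff] bn bg unfolding real_norm_def abs_less_iff by linarith
    qed
  qed
  show ?thesis unfolding Gs_def G_def using I1 I2 I3 by simp
qed


end
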